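(* Let $(A, b, c)$ be a $k$-level LP instance such that, except for the last ($k$-th) player's problem, there are no linear constraints (i.e., $m_l = 0$ for all $l = 1, \ldots, k-1$; all linear constraints appear only in the $k$-th player's problem). Then, for any $\lambda \in \mathbb{R}$ with $\lambda > 0$, the feasible set of the instance $(A, \lambda b, c)$ equals $\lambda$ times the feasible set of the instance $(A, b, c)$.
   Context: A $k$-level LP instance $(A,b,c)$ has data $A_{li} \in \mathbb{Q}^{m_l \times n_i}$, $b_l \in \mathbb{Q}^{m_l}$, $c_{li} \in \mathbb{Q}^{n_i}$. Player $l$ chooses $x_l \in \mathbb{R}^{n_l}$ after players $1,\ldots,l-1$. The $l$-th player's problem, given $x_1,\ldots,x_{l-1}$, is $\inf_{x_l,\ldots,x_k}\{\sum_{i=l}^k c_{li}^\top x_i : \sum_{i=1}^k A_{li}x_i \ge b_l,\ (x_{l+1},\ldots,x_k) \in \mathcal{S}(\text{problem of player } l+1 \text{ given } x_1,\ldots,x_l)\}$, and the $k$-th player's problem is $\inf_{x_k}\{c_{kk}^\top x_k : \sum_{i=1}^k A_{ki}x_i \ge b_k\}$. The instance is identified with the first player's problem; its feasible set is the set of feasible $(x_1,\ldots,x_k)$ of the first player's problem. $\mathcal{S}(\cdot)$ denotes the optimal solution set (optimistic setting). *)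

theory Defs
  imports Complex_Main
begin

text \<open>Levels are numbered 1..k.
  n i : dimension of player i's variable x_i; m l : number of rows of player l's constraints.
  A l i r j : entry (r,j) of the block A_{li}  (r < m l, j < n i).
  b l r     : entry r of b_l.
  c l i j   : entry j of c_{li}.
  A joint decision (x_1,...,x_k) is a function x with x i j = entry j of x_i;
  all entries outside 1 \<le> i \<le> k, j < n i are required to be 0.\<close>

definition lp_points :: "(nat \<Rightarrow> nat) \<Rightarrow> nat \<Rightarrow> (nat \<Rightarrow> nat \<Rightarrow> real) set" where
  "lp_points n k = {x. \<forall>i j. (i < 1 \<or> k < i \<or> n i \<le> j) \<longrightarrow> x i j = 0}"

definition lp_cons ::
  "(nat \<Rightarrow> nat \<Rightarrow> nat \<Rightarrow> nat \<Rightarrow> real) \<Rightarrow> (nat \<Rightarrow> nat \<Rightarrow> real) \<Rightarrow> (nat \<Rightarrow> nat) \<Rightarrow> (nat \<Rightarrow> nat)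
    \<Rightarrow> nat \<Rightarrow> nat \<Rightarrow> (nat \<Rightarrow> nat \<Rightarrow> real) \<Rightarrow> bool" where
  "lp_cons A b n m k l x =
     (\<forall>r < m l. (\<Sum>i = 1..k. \<Sum>j < n i. A l i r j * x i j) \<ge> b l r)"

definition lp_obj ::
  "(nat \<Rightarrow> nat \<Rightarrow> nat \<Rightarrow> real) \<Rightarrow> (nat \<Rightarrow> nat) \<Rightarrow> nat \<Rightarrow> nat \<Rightarrow> (nat \<Rightarrow> nat \<Rightarrow> real) \<Rightarrow> real" where
  "lp_obj c n k l x = (\<Sum>i = l..k. \<Sum>j < n i. c l i j * x i j)"

definition lp_agree :: "nat \<Rightarrow> (nat \<Rightarrow> nat \<Rightarrow> real) \<Rightarrow> (nat \<Rightarrow> nat \<Rightarrow> real) \<Rightarrow> bool" where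
  "lp_agree l x y = (\<forall>i < l. x i = y i)"

text \<open>lp_opt ... d x: the tail (x_l,...,x_k) of x, with l = k - d, is an optimal solution
  (optimistic setting) of player l's problem given x_1,...,x_{l-1}.\<close>
primrec lp_opt ::
  "(nat \<Rightarrow> nat \<Rightarrow> nat \<Rightarrow> nat \<Rightarrow> real) \<Rightarrow> (nat \<Rightarrow> nat \<Rightarrow> real) \<Rightarrow> (nat \<Rightarrow> nat \<Rightarrow> nat \<Rightarrow> real)
    \<Rightarrow> (nat \<Rightarrow> nat) \<Rightarrow> (nat \<Rightarrow> nat) \<Rightarrow> nat \<Rightarrow> nat \<Rightarrow> (nat \<Rightarrow> nat \<Rightarrow> real) \<Rightarrow> bool" where
  "lp_opt A b c n m k 0 x =
     (x \<in> lp_points n k \<and> lp_cons A b n m k k x \<and>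
      (\<forall>y \<in> lp_points n k. lp_agree k x y \<and> lp_cons A b n m k k y
          \<longrightarrow> lp_obj c n k k x \<le> lp_obj c n k k y))"
| "lp_opt A b c n m k (Suc d) x =
     (let l = k - Suc d;
          F = (\<lambda>z. z \<in> lp_points n k \<and> lp_cons A b n m k l z \<and> lp_opt A b c n m k d z)
      in F x \<and> (\<forall>y. lp_agree l x y \<and> F y \<longrightarrow> lp_obj c n k l x \<le> lp_obj c n k l y))"

text \<open>Feasible set of the instance = feasible set of player 1's problem.\<close>
definition lp_feasible ::
  "(nat \<Rightarrow> nat \<Rightarrow> nat \<Rightarrow> nat \<Rightarrow> real) \<Rightarrow> (nat \<Rightarrow> nat \<Rightarrow> real) \<Rightarrow> (nat \<Rightarrow> nat \<Rightarrow> nat \<Rightarrow> real)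
    \<Rightarrow> (nat \<Rightarrow> nat) \<Rightarrow> (nat \<Rightarrow> nat) \<Rightarrow> nat \<Rightarrow> (nat \<Rightarrow> nat \<Rightarrow> real) set" where
  "lp_feasible A b c n m k =
     {x \<in> lp_points n k. lp_cons A b n m k 1 x \<and> (2 \<le> k \<longrightarrow> lp_opt A b c n m k (k - 2) x)}"

end

theory Submission
  imports Defs
begin

definition scl :: "real \<Rightarrow> (nat \<Rightarrow> nat \<Rightarrow> real) \<Rightarrow> (nat \<Rightarrow> nat \<Rightarrow> real)" where
  "scl lam x = (\<lambda>i j. lam * x i j)"

lemma scl_inv: "lam \<noteq> 0 \<Longrightarrow> scl lam (scl (1/lam) x) = x"
  by (simp add: scl_def)

lemma all_scl: "lam \<noteq> 0 \<Longrightarrow> (\<forall>y. P y) = (\<forall>y. P (scl lam y))"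
  by (metis scl_inv)

lemma points_scl: "lam \<noteq> 0 \<Longrightarrow> (scl lam x \<in> lp_points n k) = (x \<in> lp_points n k)"
  by (simp add: scl_def lp_points_def)

lemma cons_scl: "lam > 0 \<Longrightarrow>
  lp_cons A (\<lambda>l r. lam * b l r) n m k l (scl lam x) = lp_cons A b n m k l x"
proof -
  assume lp: "lam > 0"
  have e: "(\<Sum>i = 1..k. \<Sum>j < n i. A l i r j * scl lam x i j) = lam * (\<Sum>i = 1..k. \<Sum>j < n i. A l i r j * x i j)" for r
    by (simp add: scl_def sum_distrib_left algebra_simps)
  show ?thesis unfolding lp_cons_def e using lp by simp
qed

lemma obj_scl: "lp_obj c n k l (scl lam x) = lam * lp_obj c n k l x"
  by (simp add: lp_obj_def scl_def sum_distrib_left algebra_simps)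

lemma agree_scl: "lam \<noteq> 0 \<Longrightarrow> lp_agree l (scl lam x) (scl lam y) = lp_agree l x y"
  by (simp add: lp_agree_def scl_def fun_eq_iff)

lemma opt_scl: "lam > 0 \<Longrightarrow>
  lp_opt A (\<lambda>l r. lam * b l r) c n m k d (scl lam x) = lp_opt A b c n m k d x"
proof (induction d arbitrary: x)
  case 0
  have nz: "lam \<noteq> 0" using 0 by simp
  have "(\<forall>y \<in> lp_points n k. lp_agree k (scl lam x) y \<and> lp_cons A (\<lambda>l r. lam * b l r) n m k k y
          \<longrightarrow> lp_obj c n k k (scl lam x) \<le> lp_obj c n k k y)
     = (\<forall>y. y \<in> lp_points n k \<longrightarrow> lp_agree k (scl lam x) y \<and> lp_cons A (\<lambda>l r. lam * b l r) n m k k y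
          \<longrightarrow> lp_obj c n k k (scl lam x) \<le> lp_obj c n k k y)" by blast
  also have "\<dots> = (\<forall>y. scl lam y \<in> lp_points n k \<longrightarrow> lp_agree k (scl lam x) (scl lam y) \<and> lp_cons A (\<lambda>l r. lam * b l r) n m k k (scl lam y)
          \<longrightarrow> lp_obj c n k k (scl lam x) \<le> lp_obj c n k k (scl lam y))"
    by (rule all_scl[OF nz])
  also have "\<dots> = (\<forall>y \<in> lp_points n k. lp_agree k x y \<and> lp_cons A b n m k k y
          \<longrightarrow> lp_obj c n k k x \<le> lp_obj c n k k y)"
    using 0 nz by (simp add: points_scl agree_scl cons_scl obj_scl Ball_def)
  finally show ?case using 0 nz by (simp add: points_scl cons_scl)
next
  case (Suc d)
  have nz: "lam \<noteq> 0" using Suc by simp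
  let ?l = "k - Suc d"
  have "(\<forall>y. lp_agree ?l (scl lam x) y \<and> (y \<in> lp_points n k \<and> lp_cons A (\<lambda>l r. lam * b l r) n m k ?l y
            \<and> lp_opt A (\<lambda>l r. lam * b l r) c n m k d y) \<longrightarrow> lp_obj c n k ?l (scl lam x) \<le> lp_obj c n k ?l y)
     = (\<forall>y. lp_agree ?l (scl lam x) (scl lam y) \<and> (scl lam y \<in> lp_points n k \<and> lp_cons A (\<lambda>l r. lam * b l r) n m k ?l (scl lam y)
            \<and> lp_opt A (\<lambda>l r. lam * b l r) c n m k d (scl lam y)) \<longrightarrow> lp_obj c n k ?l (scl lam x) \<le> lp_obj c n k ?l (scl lam y))"
    by (rule all_scl[OF nz])
  also have "\<dots> = (\<forall>y. lp_agree ?l x y \<and> (y \<in> lp_points n k \<and> lp_cons A b n m k ?l y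
            \<and> lp_opt A b c n m k d y) \<longrightarrow> lp_obj c n k ?l x \<le> lp_obj c n k ?l y)"
    using Suc nz by (simp add: points_scl agree_scl cons_scl obj_scl)
  finally show ?case using Suc nz by (simp add: Let_def points_scl cons_scl)
qed

theorem lemma3p2:
  fixes A :: "nat \<Rightarrow> nat \<Rightarrow> nat \<Rightarrow> nat \<Rightarrow> real"
    and b :: "nat \<Rightarrow> nat \<Rightarrow> real"
    and c :: "nat \<Rightarrow> nat \<Rightarrow> nat \<Rightarrow> real"
    and n m :: "nat \<Rightarrow> nat" and k :: nat and lam :: real
  assumes "1 \<le> k"
    and A_rat: "\<forall>l\<in>{1..k}. \<forall>i\<in>{1..k}. \<forall>r < m l. \<forall>j < n i. A l i r j \<in> \<rat>"
    and b_rat: "\<forall>l\<in>{1..k}. \<forall>r < m l. b l r \<in> \<rat>"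
    and c_rat: "\<forall>l\<in>{1..k}. \<forall>i\<in>{l..k}. \<forall>j < n i. c l i j \<in> \<rat>"
    and no_upper_cons: "\<forall>l\<in>{1..<k}. m l = 0"
    and "lam > 0"
  shows "lp_feasible A (\<lambda>l r. lam * b l r) c n m k
           = (\<lambda>x. \<lambda>i j. lam * x i j) ` lp_feasible A b c n m k"
proof -
  have lp: "lam > 0" by fact
  have nz: "lam \<noteq> 0" using lp by simp
  have key: "(scl lam x \<in> lp_feasible A (\<lambda>l r. lam * b l r) c n m k) = (x \<in> lp_feasible A b c n m k)" for x
    unfolding lp_feasible_def using lp nz by (simp add: points_scl cons_scl opt_scl)
  have f: "(\<lambda>x. \<lambda>i j. lam * x i j) = scl lam" by (simp add: scl_def fun_eq_iff)
  show ?thesis unfolding f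
  proof
    show "lp_feasible A (\<lambda>l r. lam * b l r) c n m k \<subseteq> scl lam ` lp_feasible A b c n m k"
    proof
      fix x assume "x \<in> lp_feasible A (\<lambda>l r. lam * b l r) c n m k"
      then have "scl lam (scl (1/lam) x) \<in> lp_feasible A (\<lambda>l r. lam * b l r) c n m k"
        using scl_inv[OF nz] by simp
      then have "scl (1/lam) x \<in> lp_feasible A b c n m k" using key by blast
      then show "x \<in> scl lam ` lp_feasible A b c n m k" using scl_inv[OF nz] by (metis image_eqI)
    qed
  next
    show "scl lam ` lp_feasible A b c n m k \<subseteq> lp_feasible A (\<lambda>l r. lam * b l r) c n m k"
      using key by blast
  qed
qed

end
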